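(* Let $G$ be a group, $\phi\in\mathrm{End}(G)$, and $N\trianglelefteq G$ a normal subgroup with $\phi(N)\subseteq N$. Let $\hat\phi\in\mathrm{End}(G/N)$ be given by $\hat\phi(gN):=\phi(g)N$ and let $\rho:G\to G/N$ be the canonical projection. Then for every $\phi$-cellular automaton $\mathcal{T}:A^G\to A^G$ there exists a unique $\hat\phi$-cellular automaton $\widehat{\mathcal{T}}:A^{G/N}\to A^{G/N}$ such that $\rho^*\circ\widehat{\mathcal{T}}=\mathcal{T}\circ\rho^*$.
   Context: $A$ is a finite set with $|A|\ge 2$. For a group $G$, $A^G$ is the set of functions $G\to A$ with shift action $(g\cdot x)(k):=x(g^{-1}k)$. For groups $G,H$ and $\phi\in\mathrm{Hom}(H,G)$, a $\phi$-cellular automaton is a map $\mathcal{T}:A^G\to A^H$ for which there exist finite $T\subseteq G$ and $\mu:A^T\to A$ with $\mathcal{T}(x)(h)=\mu((\phi(h^{-1})\cdot x)|_T)$ for all $x,h$. For a homomorphism $\rho:G\to G/N$, $\rho^*:A^{G/N}\to A^G$ is $\rho^*(x):=x\circ\rho$. *)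

theory Defs
  imports "HOL-Algebra.Algebra" "HOL-Library.FuncSet"
begin

definition configs :: "('g,'m) monoid_scheme \<Rightarrow> 'a set \<Rightarrow> ('g \<Rightarrow> 'a) set" where
  "configs G A = carrier G \<rightarrow>\<^sub>E A"

definition shift :: "('g,'m) monoid_scheme \<Rightarrow> 'g \<Rightarrow> ('g \<Rightarrow> 'a) \<Rightarrow> ('g \<Rightarrow> 'a)" where
  "shift G g x = (\<lambda>k\<in>carrier G. x (inv\<^bsub>G\<^esub> g \<otimes>\<^bsub>G\<^esub> k))"

definition phi_CA :: "('g,'m) monoid_scheme \<Rightarrow> ('h,'n) monoid_scheme \<Rightarrow> 'a set \<Rightarrow>
    ('h \<Rightarrow> 'g) \<Rightarrow> (('g \<Rightarrow> 'a) \<Rightarrow> ('h \<Rightarrow> 'a)) \<Rightarrow> bool" where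
  "phi_CA G H A \<phi> T \<longleftrightarrow>
     (\<exists>S (\<mu> :: ('g \<Rightarrow> 'a) \<Rightarrow> 'a). finite S \<and> S \<subseteq> carrier G \<and>
        (\<forall>p \<in> S \<rightarrow>\<^sub>E A. \<mu> p \<in> A) \<and>
        (\<forall>x \<in> configs G A. \<forall>h \<in> carrier H.
            T x h = \<mu> (restrict (shift G (\<phi> (inv\<^bsub>H\<^esub> h)) x) S)))"

text \<open>Induced endomorphism of G/N: gN |-> phi(g)N (cosets written N #> g).\<close>
definition quot_endo :: "('g,'m) monoid_scheme \<Rightarrow> 'g set \<Rightarrow> ('g \<Rightarrow> 'g) \<Rightarrow> 'g set \<Rightarrow> 'g set" where
  "quot_endo G N \<phi> C = N #>\<^bsub>G\<^esub> \<phi> (SOME g. g \<in> C)"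

definition pullback :: "('g,'m) monoid_scheme \<Rightarrow> 'g set \<Rightarrow> ('g set \<Rightarrow> 'a) \<Rightarrow> ('g \<Rightarrow> 'a)" where
  "pullback G N x = (\<lambda>g\<in>carrier G. x (N #>\<^bsub>G\<^esub> g))"

end

theory Submission
  imports Defs
begin

lemma key_coset:
  fixes G :: "('g,'m) monoid_scheme"
  assumes nor: "N \<lhd> G" and hom: "\<phi> \<in> hom G G" and NN: "\<phi> ` N \<subseteq> N"
    and g: "g \<in> carrier G" and s: "s \<in> carrier G"
  shows "inv\<^bsub>G Mod N\<^esub> (quot_endo G N \<phi> (inv\<^bsub>G Mod N\<^esub> (N #>\<^bsub>G\<^esub> g))) \<otimes>\<^bsub>G Mod N\<^esub> (N #>\<^bsub>G\<^esub> s)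
         = N #>\<^bsub>G\<^esub> (inv\<^bsub>G\<^esub> (\<phi> (inv\<^bsub>G\<^esub> g)) \<otimes>\<^bsub>G\<^esub> s)"
proof -
  interpret normal N G by (rule nor)
  have sub: "subgroup N G" by (rule subgroup_axioms)
  have Nsub: "N \<subseteq> carrier G" by (rule subset)
  have phic: "\<And>x. x \<in> carrier G \<Longrightarrow> \<phi> x \<in> carrier G" using hom by (auto simp: hom_def)
  have phim: "\<And>x y. x \<in> carrier G \<Longrightarrow> y \<in> carrier G \<Longrightarrow> \<phi> (x \<otimes>\<^bsub>G\<^esub> y) = \<phi> x \<otimes>\<^bsub>G\<^esub> \<phi> y"
    using hom by (auto simp: hom_def)
  have gc: "N #>\<^bsub>G\<^esub> g \<in> carrier (G Mod N)" using g Nsub by (simp add: FactGroup_def rcosetsI)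
  have i1: "inv\<^bsub>G Mod N\<^esub> (N #>\<^bsub>G\<^esub> g) = N #>\<^bsub>G\<^esub> inv\<^bsub>G\<^esub> g"
    using inv_FactGroup[OF gc] rcos_inv[OF g] by simp
  have ig: "inv\<^bsub>G\<^esub> g \<in> carrier G" using g by simp
  let ?g' = "SOME x. x \<in> N #>\<^bsub>G\<^esub> inv\<^bsub>G\<^esub> g"
  have "inv\<^bsub>G\<^esub> g \<in> N #>\<^bsub>G\<^esub> inv\<^bsub>G\<^esub> g" using rcos_self[OF ig sub] .
  hence g'in: "?g' \<in> N #>\<^bsub>G\<^esub> inv\<^bsub>G\<^esub> g" by (rule someI)
  then obtain n where n: "n \<in> N" and g'eq: "?g' = n \<otimes>\<^bsub>G\<^esub> inv\<^bsub>G\<^esub> g"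
    by (auto simp: r_coset_def)
  have nc: "n \<in> carrier G" using n Nsub by auto
  have "\<phi> ?g' = \<phi> n \<otimes>\<^bsub>G\<^esub> \<phi> (inv\<^bsub>G\<^esub> g)" using g'eq phim[OF nc ig] by simp
  hence "\<phi> ?g' \<in> N #>\<^bsub>G\<^esub> \<phi> (inv\<^bsub>G\<^esub> g)" using NN n Nsub phic[OF ig] by (auto intro: rcosI)
  hence D: "quot_endo G N \<phi> (N #>\<^bsub>G\<^esub> inv\<^bsub>G\<^esub> g) = N #>\<^bsub>G\<^esub> \<phi> (inv\<^bsub>G\<^esub> g)"
    unfolding quot_endo_def using repr_independence[OF _ phic[OF ig] sub] by simp
  have Dc: "N #>\<^bsub>G\<^esub> \<phi> (inv\<^bsub>G\<^esub> g) \<in> carrier (G Mod N)" using phic[OF ig] Nsub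
    by (simp add: FactGroup_def rcosetsI)
  have i2: "inv\<^bsub>G Mod N\<^esub> (N #>\<^bsub>G\<^esub> \<phi> (inv\<^bsub>G\<^esub> g)) = N #>\<^bsub>G\<^esub> inv\<^bsub>G\<^esub> (\<phi> (inv\<^bsub>G\<^esub> g))"
    using inv_FactGroup[OF Dc] rcos_inv[OF phic[OF ig]] by simp
  show ?thesis using i1 D i2 rcos_sum[OF inv_closed[OF phic[OF ig]] s]
    by (simp add: FactGroup_def)
qed

theorem lemma4p3:
  fixes G :: "('g,'m) monoid_scheme" and N :: "'g set" and \<phi> :: "'g \<Rightarrow> 'g"
    and A :: "'a set" and T :: "('g \<Rightarrow> 'a) \<Rightarrow> ('g \<Rightarrow> 'a)"
  assumes "group G" and "finite A" and "card A \<ge> 2"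
    and "\<phi> \<in> hom G G" and "N \<lhd> G" and "\<phi> ` N \<subseteq> N"
    and "phi_CA G G A \<phi> T"
  shows "\<exists>Th. phi_CA (G Mod N) (G Mod N) A (quot_endo G N \<phi>) Th
           \<and> (\<forall>x \<in> configs (G Mod N) A. \<forall>g \<in> carrier G.
                 pullback G N (Th x) g = T (pullback G N x) g)
           \<and> (\<forall>Th'. phi_CA (G Mod N) (G Mod N) A (quot_endo G N \<phi>) Th'
                 \<and> (\<forall>x \<in> configs (G Mod N) A. \<forall>g \<in> carrier G.
                       pullback G N (Th' x) g = T (pullback G N x) g)
                 \<longrightarrow> (\<forall>x \<in> configs (G Mod N) A. \<forall>C \<in> carrier (G Mod N). Th' x C = Th x C))"
proof -
  interpret normal N G by (rule assms(5))
  have Nsub: "N \<subseteq> carrier G" by (rule subset)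
  obtain S and \<mu> :: "('g \<Rightarrow> 'a) \<Rightarrow> 'a" where S: "finite S" "S \<subseteq> carrier G"
    and \<mu>A: "\<forall>p \<in> S \<rightarrow>\<^sub>E A. \<mu> p \<in> A"
    and Teq: "\<forall>x \<in> configs G A. \<forall>h \<in> carrier G.
            T x h = \<mu> (restrict (shift G (\<phi> (inv\<^bsub>G\<^esub> h)) x) S)"
    using assms(7) unfolding phi_CA_def by blast
  define S' where "S' = (\<lambda>s. N #>\<^bsub>G\<^esub> s) ` S"
  define \<mu>' where "\<mu>' = (\<lambda>p :: 'g set \<Rightarrow> 'a. \<mu> (\<lambda>s\<in>S. p (N #>\<^bsub>G\<^esub> s)))"
  define Th where "Th = (\<lambda>x C. \<mu>' (restrict (shift (G Mod N) (quot_endo G N \<phi> (inv\<^bsub>G Mod N\<^esub> C)) x) S'))"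
  have CA: "phi_CA (G Mod N) (G Mod N) A (quot_endo G N \<phi>) Th"
    unfolding phi_CA_def
  proof (intro exI conjI ballI)
    show "finite S'" using S by (simp add: S'_def)
    show "S' \<subseteq> carrier (G Mod N)" using S Nsub by (auto simp: S'_def FactGroup_def rcosetsI)
    fix p assume "p \<in> S' \<rightarrow>\<^sub>E A"
    hence "(\<lambda>s\<in>S. p (N #>\<^bsub>G\<^esub> s)) \<in> S \<rightarrow>\<^sub>E A" by (auto simp: S'_def)
    thus "\<mu>' p \<in> A" using \<mu>A by (simp add: \<mu>'_def)
  next
    fix x h
    show "Th x h = \<mu>' (restrict (shift (G Mod N) (quot_endo G N \<phi> (inv\<^bsub>G Mod N\<^esub> h)) x) S')"
      by (simp add: Th_def)
  qed
  have comm: "\<forall>x \<in> configs (G Mod N) A. \<forall>g \<in> carrier G.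
                 pullback G N (Th x) g = T (pullback G N x) g"
  proof (intro ballI)
    fix x g assume x: "x \<in> configs (G Mod N) A" and g: "g \<in> carrier G"
    have px: "pullback G N x \<in> configs G A"
      using x Nsub by (auto simp: configs_def pullback_def FactGroup_def rcosetsI)
    have "T (pullback G N x) g = \<mu> (restrict (shift G (\<phi> (inv\<^bsub>G\<^esub> g)) (pullback G N x)) S)"
      using Teq px g by blast
    also have "restrict (shift G (\<phi> (inv\<^bsub>G\<^esub> g)) (pullback G N x)) S
       = (\<lambda>s\<in>S. restrict (shift (G Mod N) (quot_endo G N \<phi> (inv\<^bsub>G Mod N\<^esub> (N #>\<^bsub>G\<^esub> g))) x) S' (N #>\<^bsub>G\<^esub> s))"
    proof (rule restrict_ext)
      fix s assume sS: "s \<in> S"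
      hence sc: "s \<in> carrier G" using S by auto
      have phic: "\<phi> (inv\<^bsub>G\<^esub> g) \<in> carrier G" using assms(4) g by (auto simp: hom_def)
      have m: "inv\<^bsub>G\<^esub> (\<phi> (inv\<^bsub>G\<^esub> g)) \<otimes>\<^bsub>G\<^esub> s \<in> carrier G" using phic sc by simp
      have Cc: "N #>\<^bsub>G\<^esub> s \<in> carrier (G Mod N)" using sc Nsub by (simp add: FactGroup_def rcosetsI)
      show "shift G (\<phi> (inv\<^bsub>G\<^esub> g)) (pullback G N x) s
         = restrict (shift (G Mod N) (quot_endo G N \<phi> (inv\<^bsub>G Mod N\<^esub> (N #>\<^bsub>G\<^esub> g))) x) S' (N #>\<^bsub>G\<^esub> s)"
        using sS sc m Cc key_coset[OF assms(5) assms(4) assms(6) g sc]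
        by (simp add: shift_def pullback_def S'_def)
    qed
    also have "\<mu> \<dots> = Th x (N #>\<^bsub>G\<^esub> g)" by (simp add: Th_def \<mu>'_def)
    also have "\<dots> = pullback G N (Th x) g" using g by (simp add: pullback_def)
    finally show "pullback G N (Th x) g = T (pullback G N x) g" by simp
  qed
  have uniq: "\<forall>Th'. phi_CA (G Mod N) (G Mod N) A (quot_endo G N \<phi>) Th'
                 \<and> (\<forall>x \<in> configs (G Mod N) A. \<forall>g \<in> carrier G.
                       pullback G N (Th' x) g = T (pullback G N x) g)
                 \<longrightarrow> (\<forall>x \<in> configs (G Mod N) A. \<forall>C \<in> carrier (G Mod N). Th' x C = Th x C)"
  proof (intro allI impI ballI)
    fix Th' x C
    assume H: "phi_CA (G Mod N) (G Mod N) A (quot_endo G N \<phi>) Th'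
                 \<and> (\<forall>x \<in> configs (G Mod N) A. \<forall>g \<in> carrier G.
                       pullback G N (Th' x) g = T (pullback G N x) g)"
      and x: "x \<in> configs (G Mod N) A" and C: "C \<in> carrier (G Mod N)"
    from C obtain g where g: "g \<in> carrier G" and Cg: "C = N #>\<^bsub>G\<^esub> g"
      by (auto simp: FactGroup_def RCOSETS_def)
    have "Th' x C = pullback G N (Th' x) g" using g Cg by (simp add: pullback_def)
    also have "\<dots> = T (pullback G N x) g" using H x g by blast
    also have "\<dots> = pullback G N (Th x) g" using comm x g by simp
    also have "\<dots> = Th x C" using g Cg by (simp add: pullback_def)
    finally show "Th' x C = Th x C" .
  qed
  show ?thesis using CA comm uniq by blast
qed

end
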